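(* Consider $G\ge 2$ treatment levels with potential outcomes $Y(1),\dots,Y(G)$, assignment indicators $\mathbf{W}=(W_1,\dots,W_G)$ (each $W_g\in\{0,1\}$, $W_1+\cdots+W_G=1$) with $\rho_g=\mathbb{P}(W_g=1)>0$ for all $g$, and a $1\times K$ covariate vector $\mathbf{X}$. Assume (random assignment) $\mathbf{W}$ is independent of $(Y(1),\dots,Y(G),\mathbf{X})$, (random sampling) $\{(\mathbf{W}_i,Y_i(1),\dots,Y_i(G),\mathbf{X}_i)\}_{i=1}^N$ are i.i.d. copies for a nonrandom integer $N$, and all $Y(g)$ and components of $\mathbf{X}$ have finite second moments. Let $Y_i=\sum_{g}W_{ig}Y_i(g)$ be the observed outcome, $N_g=\sum_{i=1}^N W_{ig}$, and $\bar Y_g=N_g^{-1}\sum_{i=1}^N W_{ig}Y_i$ the subsample mean, stacked into $\bar{\mathbf{Y}}=(\bar Y_1,\dots,\bar Y_G)'$, and let $\boldsymbol\mu=(\mu_1,\dots,\mu_G)'$. Then $$\sqrt{N}(\bar{\mathbf{Y}}-\boldsymbol\mu)=N^{-1/2}\sum_{i=1}^N(\mathbf{L}_i+\mathbf{Q}_i)+o_p(1),$$ where $\mathbf{L}_i$ is the $G\times1$ vector with $g$-th entry $W_{ig}\dot{\mathbf{X}}_i\boldsymbol\beta_g/\rho_g$ and $\mathbf{Q}_i$ is the $G\times 1$ vector with $g$-th entry $W_{ig}U_i(g)/\rho_g$.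
   Context: $\mu_g=\mathbb{E}[Y(g)]$, $\boldsymbol\mu_{\mathbf{X}}=\mathbb{E}(\mathbf{X})$, $\dot{\mathbf{X}}=\mathbf{X}-\boldsymbol\mu_{\mathbf{X}}$. For each $g$, $\boldsymbol\beta_g$ is the coefficient vector of the population linear projection of $Y(g)-\mu_g$ onto $\dot{\mathbf{X}}$, and $U(g)=Y(g)-\mu_g-\dot{\mathbf{X}}\boldsymbol\beta_g$, so that $\mathbb{E}[U(g)]=0$ and $\mathbb{E}[\dot{\mathbf{X}}'U(g)]=\mathbf{0}$. Subscript $i$ denotes the corresponding quantity for the $i$-th draw ($\dot{\mathbf{X}}_i=\mathbf{X}_i-\boldsymbol\mu_{\mathbf{X}}$, $U_i(g)=Y_i(g)-\mu_g-\dot{\mathbf{X}}_i\boldsymbol\beta_g$). *)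

theory Defs
  imports "HOL-Probability.Probability"
begin

definition op1 :: "'a measure \<Rightarrow> (nat \<Rightarrow> 'a \<Rightarrow> 'b::real_normed_vector) \<Rightarrow> bool" where
  "op1 M R \<longleftrightarrow> (\<forall>e>0. (\<lambda>N. measure M {\<omega> \<in> space M. norm (R N \<omega>) > e}) \<longlonglongrightarrow> 0)"

definition vec_expectation :: "'a measure \<Rightarrow> ('a \<Rightarrow> real ^ 'k) \<Rightarrow> real ^ 'k" where
  "vec_expectation M X = (\<chi> k. integral\<^sup>L M (\<lambda>\<omega>. X \<omega> $ k))"

definition is_lin_proj_coef :: "'a measure \<Rightarrow> ('a \<Rightarrow> real) \<Rightarrow> ('a \<Rightarrow> real ^ 'k) \<Rightarrow> real ^ 'k \<Rightarrow> bool" where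
  "is_lin_proj_coef M V D b \<longleftrightarrow>
     (\<forall>k. integral\<^sup>L M (\<lambda>\<omega>. D \<omega> $ k * (V \<omega> - D \<omega> \<bullet> b)) = 0)"

definition indep_rv :: "'a measure \<Rightarrow> ('a \<Rightarrow> 'b::topological_space) \<Rightarrow> ('a \<Rightarrow> 'c::topological_space) \<Rightarrow> bool" where
  "indep_rv M A B \<longleftrightarrow>
     A \<in> borel_measurable M \<and> B \<in> borel_measurable M \<and>
     (\<forall>S \<in> sets borel. \<forall>T \<in> sets borel.
        measure M {\<omega> \<in> space M. A \<omega> \<in> S \<and> B \<omega> \<in> T}
        = measure M {\<omega> \<in> space M. A \<omega> \<in> S} * measure M {\<omega> \<in> space M. B \<omega> \<in> T})"

end

theory Submission
  imports Defs
begin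
lemma alg_lq: "(x::real) * a / r + x * (c - a) / r = x * c / r"
proof -
  have "x * a / r + x * (c - a) / r = (x * a + x * (c - a)) / r" by (simp add: add_divide_distrib)
  also have "x * a + x * (c - a) = x * c" by (simp add: right_diff_distrib)
  finally show ?thesis .
qed

lemma alg_sq: "((y::real) - m)\<^sup>2 \<le> 2 * y\<^sup>2 + 2 * m\<^sup>2"
proof -
  have "0 \<le> (y + m)\<^sup>2" by simp
  moreover have "2 * y\<^sup>2 + 2 * m\<^sup>2 - (y - m)\<^sup>2 = (y + m)\<^sup>2" by (simp add: power2_eq_square algebra_simps)
  ultimately show ?thesis by linarith
qed

lemma alg_div: "T \<noteq> 0 \<Longrightarrow> (S::real) / T - m = (S - m * T) / T"
  by (simp add: diff_divide_distrib)

lemma t1: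
  fixes S T rho n :: real
  assumes sN: "sqrt n > 0" and T0: "T > 0" and rho: "rho > 0"
  shows "sqrt n * (S / T) - (1 / sqrt n) * (S / rho) = S * (n * rho - T) / (sqrt n * T * rho)"
proof -
  have n: "n = sqrt n * sqrt n" using sN by simp
  have "sqrt n * (S / T) - (1 / sqrt n) * (S / rho) = (sqrt n * sqrt n * rho * S - T * S) / (sqrt n * T * rho)"
    using sN T0 rho by (simp add: field_simps)
  also have "\<dots> = S * (n * rho - T) / (sqrt n * T * rho)"
    by (subst (2) n) (simp add: algebra_simps)
  finally show ?thesis .
qed
lemma t2:
  fixes K d rho n e :: real
  assumes "sqrt n > 0" "n > 0" "rho > 0" "K > 0"
  shows "(K * sqrt n) * (d * n) / (sqrt n * (n * rho / 2) * rho) = 2 * K * d / rho\<^sup>2"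
  using assms by (simp add: field_simps power2_eq_square)
lemma t3: fixes K rho e :: real assumes "K > 0" "rho > 0" shows "2 * K * (e*rho\<^sup>2/(4*K)) / rho\<^sup>2 = e / 2"
  using assms by (simp add: field_simps power2_eq_square)

lemma (in prob_space) cheb:
  fixes Z :: "nat \<Rightarrow> 'a \<Rightarrow> real"
  assumes meas[measurable]: "\<And>i. Z i \<in> borel_measurable M"
    and sq: "\<And>i. integrable M (\<lambda>\<omega>. (Z i \<omega>)\<^sup>2)"
    and orth: "\<And>i j. i \<noteq> j \<Longrightarrow> (\<integral>\<omega>. Z i \<omega> * Z j \<omega> \<partial>M) = 0"
    and bnd: "\<And>i. (\<integral>\<omega>. (Z i \<omega>)\<^sup>2 \<partial>M) \<le> C"
    and t: "t > 0"
  shows "prob {\<omega>\<in>space M. t < \<bar>\<Sum>i<N. Z i \<omega>\<bar>} \<le> real N * C / t\<^sup>2"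
proof -
  have intp: "integrable M (\<lambda>\<omega>. Z i \<omega> * Z j \<omega>)" for i j
  proof (rule Bochner_Integration.integrable_bound[where f="\<lambda>\<omega>. (Z i \<omega>)\<^sup>2 + (Z j \<omega>)\<^sup>2"])
    show "integrable M (\<lambda>\<omega>. (Z i \<omega>)\<^sup>2 + (Z j \<omega>)\<^sup>2)" using sq by auto
    show "(\<lambda>\<omega>. Z i \<omega> * Z j \<omega>) \<in> borel_measurable M" by measurable
    show "AE x in M. norm (Z i x * Z j x) \<le> norm ((Z i x)\<^sup>2 + (Z j x)\<^sup>2)"
    proof (rule AE_I2)
      fix x
      have "2 * \<bar>Z i x * Z j x\<bar> \<le> (Z i x)\<^sup>2 + (Z j x)\<^sup>2"
      proof -
        have "0 \<le> (\<bar>Z i x\<bar> - \<bar>Z j x\<bar>)\<^sup>2" by simp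
        then show ?thesis by (simp add: power2_eq_square algebra_simps abs_mult)
      qed
      then show "norm (Z i x * Z j x) \<le> norm ((Z i x)\<^sup>2 + (Z j x)\<^sup>2)" by simp
    qed
  qed
  have sqeq: "(\<Sum>i<N. Z i \<omega>)\<^sup>2 = (\<Sum>i<N. \<Sum>j<N. Z i \<omega> * Z j \<omega>)" for \<omega>
    by (simp add: power2_eq_square sum_product)
  have intS: "integrable M (\<lambda>\<omega>. (\<Sum>i<N. Z i \<omega>)\<^sup>2)"
    unfolding sqeq using intp by auto
  have "(\<integral>\<omega>. (\<Sum>i<N. Z i \<omega>)\<^sup>2 \<partial>M) = (\<Sum>i<N. \<Sum>j<N. \<integral>\<omega>. Z i \<omega> * Z j \<omega> \<partial>M)"
    unfolding sqeq using intp by (simp add: Bochner_Integration.integral_sum)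
  also have "\<dots> = (\<Sum>i<N. \<integral>\<omega>. Z i \<omega> * Z i \<omega> \<partial>M)"
  proof (rule sum.cong[OF refl])
    fix i assume "i \<in> {..<N}"
    then have "(\<Sum>j<N. \<integral>\<omega>. Z i \<omega> * Z j \<omega> \<partial>M) = (\<Sum>j\<in>{i}. \<integral>\<omega>. Z i \<omega> * Z j \<omega> \<partial>M)"
      by (intro sum.mono_neutral_right) (auto simp: orth)
    then show "(\<Sum>j<N. \<integral>\<omega>. Z i \<omega> * Z j \<omega> \<partial>M) = (\<integral>\<omega>. Z i \<omega> * Z i \<omega> \<partial>M)" by simp
  qed
  also have "\<dots> \<le> (\<Sum>i<N. C)"
    by (intro sum_mono) (use bnd in \<open>simp add: power2_eq_square\<close>)
  also have "\<dots> = real N * C" by simp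
  finally have I: "(\<integral>\<omega>. (\<Sum>i<N. Z i \<omega>)\<^sup>2 \<partial>M) \<le> real N * C" .
  have "prob {\<omega>\<in>space M. t < \<bar>\<Sum>i<N. Z i \<omega>\<bar>} \<le> prob {\<omega>\<in>space M. t\<^sup>2 \<le> (\<Sum>i<N. Z i \<omega>)\<^sup>2}"
  proof (rule finite_measure_mono)
    show "{\<omega> \<in> space M. t < \<bar>\<Sum>i<N. Z i \<omega>\<bar>} \<subseteq> {\<omega> \<in> space M. t\<^sup>2 \<le> (\<Sum>i<N. Z i \<omega>)\<^sup>2}"
      using t by (auto simp: abs_le_square_iff[symmetric] intro: less_imp_le)
    show "{\<omega> \<in> space M. t\<^sup>2 \<le> (\<Sum>i<N. Z i \<omega>)\<^sup>2} \<in> sets M" by measurable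
  qed
  also have "\<dots> \<le> (\<integral>\<omega>. (\<Sum>i<N. Z i \<omega>)\<^sup>2 \<partial>M) / t\<^sup>2"
    by (rule integral_Markov_inequality_measure[OF intS, where A="space M"]) (use t in auto)
  also have "\<dots> \<le> real N * C / t\<^sup>2"
    using I t by (simp add: divide_right_mono)
  finally show ?thesis .
qed

lemma (in prob_space) key:
  fixes V D R :: "nat \<Rightarrow> 'a \<Rightarrow> real"
  assumes Vm[measurable]: "\<And>i. V i \<in> borel_measurable M"
    and Vsq: "\<And>i. integrable M (\<lambda>\<omega>. (V i \<omega>)\<^sup>2)"
    and Vorth: "\<And>i j. i \<noteq> j \<Longrightarrow> (\<integral>\<omega>. V i \<omega> * V j \<omega> \<partial>M) = 0"
    and Vbnd: "\<And>i. (\<integral>\<omega>. (V i \<omega>)\<^sup>2 \<partial>M) \<le> CV"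
    and Dm[measurable]: "\<And>i. D i \<in> borel_measurable M"
    and Dsq: "\<And>i. integrable M (\<lambda>\<omega>. (D i \<omega>)\<^sup>2)"
    and Dorth: "\<And>i j. i \<noteq> j \<Longrightarrow> (\<integral>\<omega>. D i \<omega> * D j \<omega> \<partial>M) = 0"
    and Dbnd: "\<And>i. (\<integral>\<omega>. (D i \<omega>)\<^sup>2 \<partial>M) \<le> CD"
    and rho: "\<rho> > 0"
    and Req: "\<And>N \<omega>. \<omega> \<in> space M \<Longrightarrow> N > 0 \<Longrightarrow> (\<Sum>i<N. D i \<omega>) + real N * \<rho> > 0 \<Longrightarrow>
        R N \<omega> = sqrt (real N) * ((\<Sum>i<N. V i \<omega>) / ((\<Sum>i<N. D i \<omega>) + real N * \<rho>))
                 - (1 / sqrt (real N)) * ((\<Sum>i<N. V i \<omega>) / \<rho>)"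
    and e: "e > 0"
  shows "(\<lambda>N. prob {\<omega>\<in>space M. e < \<bar>R N \<omega>\<bar>}) \<longlonglongrightarrow> 0"
proof (rule LIMSEQ_I)
  fix r :: real assume r: "r > 0"
  have "0 \<le> (\<integral>\<omega>. (V 0 \<omega>)\<^sup>2 \<partial>M)" by (rule integral_nonneg_AE) simp
  then have CV: "CV \<ge> 0" using Vbnd[of 0] by linarith
  have "0 \<le> (\<integral>\<omega>. (D 0 \<omega>)\<^sup>2 \<partial>M)" by (rule integral_nonneg_AE) simp
  then have CD: "CD \<ge> 0" using Dbnd[of 0] by linarith
  define K where "K = sqrt (2*CV/r) + 1"
  have "sqrt (2*CV/r) \<ge> 0" using CV r by simp
  then have K0: "K > 0" unfolding K_def by linarith
  have "K\<^sup>2 > (sqrt (2*CV/r))\<^sup>2" unfolding K_def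
    using \<open>sqrt (2*CV/r) \<ge> 0\<close> by (intro power_strict_mono) auto
  then have KK: "K\<^sup>2 > 2*CV/r" using CV r by simp
  then have KV: "CV / K\<^sup>2 < r/2" using K0 r by (simp add: field_simps)
  define \<delta> where "\<delta> = min (\<rho>/2) (e*\<rho>\<^sup>2/(4*K))"
  have d0: "\<delta> > 0" unfolding \<delta>_def using rho e K0 by simp
  obtain N0 :: nat where N0: "real N0 > 2*CD/(\<delta>\<^sup>2 * r)" using reals_Archimedean2 by blast
  show "\<exists>no. \<forall>N\<ge>no. norm (prob {\<omega>\<in>space M. e < \<bar>R N \<omega>\<bar>} - 0) < r"
  proof (intro exI allI impI)
    fix N assume "N \<ge> Suc N0"
    then have Npos: "N > 0" and "real N0 < real N" by auto
    then have NN0: "real N > 2*CD/(\<delta>\<^sup>2 * r)" using N0 by linarith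
    have sN: "sqrt (real N) > 0" using Npos by simp
    define A where "A = {\<omega>\<in>space M. K * sqrt (real N) < \<bar>\<Sum>i<N. V i \<omega>\<bar>}"
    define B where "B = {\<omega>\<in>space M. \<delta> * real N < \<bar>\<Sum>i<N. D i \<omega>\<bar>}"
    have sub: "{\<omega>\<in>space M. e < \<bar>R N \<omega>\<bar>} \<subseteq> A \<union> B"
    proof
      fix \<omega> assume w: "\<omega> \<in> {\<omega>\<in>space M. e < \<bar>R N \<omega>\<bar>}"
      show "\<omega> \<in> A \<union> B"
      proof (rule ccontr)
        assume "\<omega> \<notin> A \<union> B"
        then have S: "\<bar>\<Sum>i<N. V i \<omega>\<bar> \<le> K * sqrt (real N)" and Dd: "\<bar>\<Sum>i<N. D i \<omega>\<bar> \<le> \<delta> * real N"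
          using w unfolding A_def B_def by auto
        define S where "S = (\<Sum>i<N. V i \<omega>)"
        define DD where "DD = (\<Sum>i<N. D i \<omega>)"
        define T where "T = DD + real N * \<rho>"
        have "\<delta> \<le> \<rho>/2" unfolding \<delta>_def by simp
        then have "\<delta> * real N \<le> \<rho>/2 * real N" by (intro mult_right_mono) auto
        then have "\<delta> * real N \<le> real N * \<rho> / 2" by (simp add: algebra_simps)
        moreover have "- DD \<le> \<bar>DD\<bar>" by simp
        ultimately have Tge: "T \<ge> real N * \<rho> / 2" using Dd unfolding T_def DD_def by linarith
        have "real N * \<rho> / 2 > 0" using Npos rho by simp
        then have T0: "T > 0" using Tge by linarith
        have wS: "\<omega> \<in> space M" using w by simp
        have Rw: "R N \<omega> = sqrt (real N) * (S / T) - (1 / sqrt (real N)) * (S / \<rho>)"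
          using Req[OF wS Npos T0[unfolded T_def DD_def]] unfolding S_def T_def DD_def .
        have "R N \<omega> = S * (real N * \<rho> - T) / (sqrt (real N) * T * \<rho>)"
          unfolding Rw using sN T0 rho by (rule t1)
        also have "real N * \<rho> - T = - DD" unfolding T_def by simp
        finally have "R N \<omega> = - (S * DD) / (sqrt (real N) * T * \<rho>)" by simp
        then have "\<bar>R N \<omega>\<bar> = \<bar>S\<bar> * \<bar>DD\<bar> / (sqrt (real N) * T * \<rho>)"
          using sN T0 rho by (simp add: abs_mult)
        also have "\<dots> \<le> (K * sqrt (real N)) * (\<delta> * real N) / (sqrt (real N) * (real N * \<rho> / 2) * \<rho>)"
        proof (rule frac_le)
          show "0 \<le> K * sqrt (real N) * (\<delta> * real N)" using K0 d0 by simp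
          show "\<bar>S\<bar> * \<bar>DD\<bar> \<le> K * sqrt (real N) * (\<delta> * real N)"
            using S Dd unfolding S_def DD_def by (intro mult_mono) auto
          show "0 < sqrt (real N) * (real N * \<rho> / 2) * \<rho>" using sN Npos rho by simp
          show "sqrt (real N) * (real N * \<rho> / 2) * \<rho> \<le> sqrt (real N) * T * \<rho>"
            using Tge sN rho by (intro mult_right_mono mult_left_mono) auto
        qed
        also have "\<dots> = 2 * K * \<delta> / \<rho>\<^sup>2"
          using sN Npos rho K0 by (intro t2) auto
        also have "\<dots> \<le> 2 * K * (e*\<rho>\<^sup>2/(4*K)) / \<rho>\<^sup>2"
          using K0 rho unfolding \<delta>_def by (intro divide_right_mono mult_left_mono) auto
        also have "\<dots> = e / 2" using K0 rho by (rule t3)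
        finally show False using w e by simp
      qed
    qed
    have Am: "A \<in> sets M" unfolding A_def by measurable
    have Bm: "B \<in> sets M" unfolding B_def by measurable
    have "prob {\<omega>\<in>space M. e < \<bar>R N \<omega>\<bar>} \<le> prob (A \<union> B)"
      using Am Bm by (intro finite_measure_mono[OF sub]) auto
    also have "\<dots> \<le> prob A + prob B" using Am Bm by (intro measure_subadditive) (auto simp: emeasure_eq_measure)
    finally have PAB: "prob {\<omega>\<in>space M. e < \<bar>R N \<omega>\<bar>} \<le> prob A + prob B" .
    have PA: "prob A \<le> real N * CV / (K * sqrt (real N))\<^sup>2"
      unfolding A_def by (rule cheb[OF Vm Vsq Vorth Vbnd]) (use K0 sN in auto)
    have PA2: "real N * CV / (K * sqrt (real N))\<^sup>2 = CV / K\<^sup>2" using Npos K0 by (simp add: power_mult_distrib)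
    have PB: "prob B \<le> real N * CD / (\<delta> * real N)\<^sup>2"
      unfolding B_def by (rule cheb[OF Dm Dsq Dorth Dbnd]) (use d0 Npos in auto)
    have PB2: "real N * CD / (\<delta> * real N)\<^sup>2 = CD / (\<delta>\<^sup>2 * real N)" using Npos d0 by (simp add: power2_eq_square)
    have PB3: "CD / (\<delta>\<^sup>2 * real N) < r / 2"
    proof -
      have "2*CD/(\<delta>\<^sup>2 * r) < real N" by (rule NN0)
      moreover have p1: "\<delta>\<^sup>2 * r > 0" using d0 r by simp
      ultimately have "2*CD < real N * (\<delta>\<^sup>2 * r)" by (simp add: pos_divide_less_eq)
      moreover have p2: "\<delta>\<^sup>2 * real N > 0" using d0 Npos by simp
      ultimately show ?thesis by (simp add: pos_divide_less_eq mult_ac)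
    qed
    have "prob {\<omega>\<in>space M. e < \<bar>R N \<omega>\<bar>} < r" using KV PAB PA PA2 PB PB2 PB3 by linarith
    then show "norm (prob {\<omega>\<in>space M. e < \<bar>R N \<omega>\<bar>} - 0) < r" by simp
  qed
qed

lemma (in prob_space) sq_int_imp_int:
  fixes f :: "'a \<Rightarrow> real"
  assumes [measurable]: "f \<in> borel_measurable M" and sq: "integrable M (\<lambda>\<omega>. (f \<omega>)\<^sup>2)"
  shows "integrable M f"
proof (rule Bochner_Integration.integrable_bound[where f="\<lambda>\<omega>. 1 + (f \<omega>)\<^sup>2"])
  show "integrable M (\<lambda>\<omega>. 1 + (f \<omega>)\<^sup>2)" using sq by simp
  show "f \<in> borel_measurable M" by simp
  show "AE x in M. norm (f x) \<le> norm (1 + (f x)\<^sup>2)"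
  proof (rule AE_I2)
    fix x
    have "\<bar>f x\<bar> \<le> 1 + (f x)\<^sup>2"
    proof (cases "\<bar>f x\<bar> \<le> 1")
      case True then show ?thesis by (smt (verit) zero_le_power2)
    next
      case False
      then have "\<bar>f x\<bar> * 1 \<le> \<bar>f x\<bar> * \<bar>f x\<bar>" by (intro mult_left_mono) auto
      then show ?thesis by (simp add: power2_eq_square abs_mult_self_eq)
    qed
    then show "norm (f x) \<le> norm (1 + (f x)\<^sup>2)" by simp
  qed
qed

lemma (in prob_space) transfer_int:
  fixes Vv :: "nat \<Rightarrow> 'a \<Rightarrow> 'b::topological_space" and h :: "'b \<Rightarrow> real"
  assumes ident: "\<And>i. distr M borel (Vv i) = distr M borel (Vv 0)"
    and meas: "\<And>i. Vv i \<in> borel_measurable M"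
    and h: "h \<in> borel_measurable borel"
  shows "integrable M (\<lambda>\<omega>. h (Vv i \<omega>)) = integrable M (\<lambda>\<omega>. h (Vv 0 \<omega>))"
    and "(\<integral>\<omega>. h (Vv i \<omega>) \<partial>M) = (\<integral>\<omega>. h (Vv 0 \<omega>) \<partial>M)"
proof -
  show "integrable M (\<lambda>\<omega>. h (Vv i \<omega>)) = integrable M (\<lambda>\<omega>. h (Vv 0 \<omega>))"
    using integrable_distr_eq[OF meas[of i] h] integrable_distr_eq[OF meas[of 0] h] ident[of i] by simp
  show "(\<integral>\<omega>. h (Vv i \<omega>) \<partial>M) = (\<integral>\<omega>. h (Vv 0 \<omega>) \<partial>M)"
    using integral_distr[OF meas[of i] h] integral_distr[OF meas[of 0] h] ident[of i] by simp
qed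

lemma (in prob_space) indep_mult:
  fixes Vv :: "nat \<Rightarrow> 'a \<Rightarrow> 'b::topological_space" and h :: "'b \<Rightarrow> real"
  assumes indep: "indep_vars (\<lambda>_. borel) Vv UNIV"
    and ident: "\<And>i. distr M borel (Vv i) = distr M borel (Vv 0)"
    and meas: "\<And>i. Vv i \<in> borel_measurable M"
    and h: "h \<in> borel_measurable borel"
    and hint: "integrable M (\<lambda>\<omega>. h (Vv 0 \<omega>))"
    and ij: "i \<noteq> j"
  shows "(\<integral>\<omega>. h (Vv i \<omega>) * h (Vv j \<omega>) \<partial>M) = (\<integral>\<omega>. h (Vv 0 \<omega>) \<partial>M) * (\<integral>\<omega>. h (Vv 0 \<omega>) \<partial>M)"
proof -
  have ind2: "indep_vars (\<lambda>_. borel) (\<lambda>k \<omega>. h (Vv k \<omega>)) {i, j}"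
    by (rule indep_vars_subset[OF indep_vars_compose2[OF indep h]]) auto
  have intk: "integrable M (\<lambda>\<omega>. h (Vv k \<omega>))" for k
    using transfer_int(1)[where Vv=Vv and h=h and i=k, OF ident meas h] hint by simp
  have "(\<integral>\<omega>. (\<Prod>k\<in>{i,j}. h (Vv k \<omega>)) \<partial>M) = (\<Prod>k\<in>{i,j}. \<integral>\<omega>. h (Vv k \<omega>) \<partial>M)"
    by (rule indep_vars_lebesgue_integral[OF _ ind2]) (auto simp: intk)
  then have p: "(\<integral>\<omega>. h (Vv i \<omega>) * h (Vv j \<omega>) \<partial>M) = (\<integral>\<omega>. h (Vv i \<omega>) \<partial>M) * (\<integral>\<omega>. h (Vv j \<omega>) \<partial>M)"
    using ij by simp
  show ?thesis unfolding p transfer_int(2)[where Vv=Vv and h=h and i=i, OF ident meas h]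
    transfer_int(2)[where Vv=Vv and h=h and i=j, OF ident meas h] ..
qed

lemma (in prob_space) indep_rv_mult:
  fixes A :: "'a \<Rightarrow> 'b::topological_space" and B :: "'a \<Rightarrow> 'c::topological_space"
    and f :: "'b \<Rightarrow> real" and g :: "'c \<Rightarrow> real"
  assumes ind: "indep_rv M A B"
    and f: "f \<in> borel_measurable borel" and g: "g \<in> borel_measurable borel"
    and fi: "integrable M (\<lambda>\<omega>. f (A \<omega>))" and gi: "integrable M (\<lambda>\<omega>. g (B \<omega>))"
  shows "(\<integral>\<omega>. f (A \<omega>) * g (B \<omega>) \<partial>M) = (\<integral>\<omega>. f (A \<omega>) \<partial>M) * (\<integral>\<omega>. g (B \<omega>) \<partial>M)"
proof -
  have Am0: "A \<in> borel_measurable M" and Bm0: "B \<in> borel_measurable M"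
    and prodf0: "\<And>S T. S \<in> sets borel \<Longrightarrow> T \<in> sets borel \<Longrightarrow>
        measure M {\<omega> \<in> space M. A \<omega> \<in> S \<and> B \<omega> \<in> T}
        = measure M {\<omega> \<in> space M. A \<omega> \<in> S} * measure M {\<omega> \<in> space M. B \<omega> \<in> T}"
    using ind unfolding indep_rv_def by auto
  define A' where "A' = (\<lambda>\<omega>. f (A \<omega>))"
  define B' where "B' = (\<lambda>\<omega>. g (B \<omega>))"
  have Am: "A' \<in> borel_measurable M" unfolding A'_def by (rule measurable_compose[OF Am0 f])
  have Bm: "B' \<in> borel_measurable M" unfolding B'_def by (rule measurable_compose[OF Bm0 g])
  have prodf: "measure M {\<omega> \<in> space M. A' \<omega> \<in> S \<and> B' \<omega> \<in> T}
        = measure M {\<omega> \<in> space M. A' \<omega> \<in> S} * measure M {\<omega> \<in> space M. B' \<omega> \<in> T}"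
    if S: "S \<in> sets borel" and T: "T \<in> sets borel" for S T :: "real set"
  proof -
    have S': "f -` S \<in> sets borel" using measurable_sets[OF f S] by simp
    have T': "g -` T \<in> sets borel" using measurable_sets[OF g T] by simp
    show ?thesis using prodf0[OF S' T'] unfolding A'_def B'_def by simp
  qed
  define GA where "GA = {A' -` S \<inter> space M | S. S \<in> sets (borel :: real measure)}"
  define GB where "GB = {B' -` S \<inter> space M | S. S \<in> sets (borel :: real measure)}"
  have GAe: "GA \<subseteq> events" unfolding GA_def using Am by (auto simp: measurable_def)
  have GBe: "GB \<subseteq> events" unfolding GB_def using Bm by (auto simp: measurable_def)
  have "indep_set GA GB"
    unfolding indep_sets2_eq
  proof (intro conjI GAe GBe ballI)
    fix a b assume "a \<in> GA" "b \<in> GB"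
    then obtain S T where S: "S \<in> sets borel" "a = A' -` S \<inter> space M"
      and T: "T \<in> sets borel" "b = B' -` T \<inter> space M" unfolding GA_def GB_def by auto
    have e1: "a \<inter> b = {\<omega> \<in> space M. A' \<omega> \<in> S \<and> B' \<omega> \<in> T}" using S T by auto
    have e2: "a = {\<omega> \<in> space M. A' \<omega> \<in> S}" "b = {\<omega> \<in> space M. B' \<omega> \<in> T}" using S T by auto
    have "prob (a \<inter> b) = prob {\<omega> \<in> space M. A' \<omega> \<in> S \<and> B' \<omega> \<in> T}" using e1 by simp
    also have "\<dots> = prob {\<omega> \<in> space M. A' \<omega> \<in> S} * prob {\<omega> \<in> space M. B' \<omega> \<in> T}"
      by (rule prodf[OF S(1) T(1)])
    also have "\<dots> = prob a * prob b" using e2 by simp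
    finally show "prob (a \<inter> b) = prob a * prob b" .
  qed
  moreover have "Int_stable GA"
  proof (rule Int_stableI)
    fix a b assume "a \<in> GA" "b \<in> GA"
    then obtain S T where "S \<in> sets borel" "a = A' -` S \<inter> space M"
      "T \<in> sets borel" "b = A' -` T \<inter> space M" unfolding GA_def by auto
    then show "a \<inter> b \<in> GA" unfolding GA_def by (intro CollectI exI[of _ "S \<inter> T"]) auto
  qed
  moreover have "Int_stable GB"
  proof (rule Int_stableI)
    fix a b assume "a \<in> GB" "b \<in> GB"
    then obtain S T where "S \<in> sets borel" "a = B' -` S \<inter> space M"
      "T \<in> sets borel" "b = B' -` T \<inter> space M" unfolding GB_def by auto
    then show "a \<inter> b \<in> GB" unfolding GB_def by (intro CollectI exI[of _ "S \<inter> T"]) auto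
  qed
  ultimately have "indep_set (sigma_sets (space M) GA) (sigma_sets (space M) GB)"
    by (rule indep_set_sigma_sets)
  then have "indep_var borel A' borel B'"
    unfolding indep_var_eq GA_def GB_def using Am Bm by simp
  then show ?thesis
    using indep_var_lebesgue_integral[of A' B'] fi gi unfolding A'_def B'_def by simp
qed

lemma (in prob_space) op1_vec:
  fixes R :: "nat \<Rightarrow> 'a \<Rightarrow> real ^ 'g"
  assumes Rm: "\<And>g N. (\<lambda>\<omega>. R N \<omega> $ g) \<in> borel_measurable M"
    and Rc: "\<And>g e. e > 0 \<Longrightarrow> (\<lambda>N. prob {\<omega>\<in>space M. e < \<bar>R N \<omega> $ g\<bar>}) \<longlonglongrightarrow> 0"
  shows "op1 M R"
  unfolding op1_def
proof (intro allI impI)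
  fix e :: real assume e: "e > 0"
  define c where "c = e / real CARD('g)"
  have c: "c > 0" unfolding c_def using e by simp
  have le: "prob {\<omega>\<in>space M. e < norm (R N \<omega>)} \<le> (\<Sum>g\<in>UNIV. prob {\<omega>\<in>space M. c < \<bar>R N \<omega> $ g\<bar>})" for N
  proof -
    have sub: "{\<omega>\<in>space M. e < norm (R N \<omega>)} \<subseteq> (\<Union>g\<in>UNIV. {\<omega>\<in>space M. c < \<bar>R N \<omega> $ g\<bar>})"
    proof
      fix \<omega> assume w: "\<omega> \<in> {\<omega>\<in>space M. e < norm (R N \<omega>)}"
      show "\<omega> \<in> (\<Union>g\<in>UNIV. {\<omega>\<in>space M. c < \<bar>R N \<omega> $ g\<bar>})"
      proof (rule ccontr)
        assume "\<omega> \<notin> (\<Union>g\<in>UNIV. {\<omega>\<in>space M. c < \<bar>R N \<omega> $ g\<bar>})"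
        then have "\<forall>g. \<bar>R N \<omega> $ g\<bar> \<le> c" using w by (auto simp: not_less)
        then have "(\<Sum>g\<in>UNIV. \<bar>R N \<omega> $ g\<bar>) \<le> (\<Sum>g\<in>(UNIV::'g set). c)" by (intro sum_mono) auto
        also have "\<dots> = e" unfolding c_def by simp
        finally have "norm (R N \<omega>) \<le> e" using norm_le_l1_cart[of "R N \<omega>"] by linarith
        then show False using w by simp
      qed
    qed
    have ms: "{\<omega>\<in>space M. c < \<bar>R N \<omega> $ g\<bar>} \<in> sets M" for g
      using Rm[of N g] by measurable
    have "prob {\<omega>\<in>space M. e < norm (R N \<omega>)} \<le> prob (\<Union>g\<in>UNIV. {\<omega>\<in>space M. c < \<bar>R N \<omega> $ g\<bar>})"
      by (rule finite_measure_mono[OF sub]) (use ms in auto)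
    also have "\<dots> \<le> (\<Sum>g\<in>UNIV. prob {\<omega>\<in>space M. c < \<bar>R N \<omega> $ g\<bar>})"
      by (rule measure_subadditive_finite) (use ms in \<open>auto simp: emeasure_eq_measure\<close>)
    finally show ?thesis .
  qed
  have h: "(\<lambda>N. \<Sum>g\<in>UNIV. prob {\<omega>\<in>space M. c < \<bar>R N \<omega> $ g\<bar>}) \<longlonglongrightarrow> 0"
    by (rule tendsto_null_sum) (rule Rc[OF c])
  show "(\<lambda>N. prob {\<omega>\<in>space M. e < norm (R N \<omega>)}) \<longlonglongrightarrow> 0"
  proof (rule tendsto_sandwich[OF _ _ tendsto_const h])
    show "\<forall>\<^sub>F n in sequentially. 0 \<le> prob {\<omega>\<in>space M. e < norm (R n \<omega>)}" by simp
    show "\<forall>\<^sub>F n in sequentially. prob {\<omega>\<in>space M. e < norm (R n \<omega>)} \<le> (\<Sum>g\<in>UNIV. prob {\<omega>\<in>space M. c < \<bar>R n \<omega> $ g\<bar>})"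
      by (intro always_eventually allI le)
  qed
qed

theorem theorem1:
  fixes M :: "'a measure"
    and W :: "nat \<Rightarrow> 'a \<Rightarrow> real ^ 'g"
    and Y :: "nat \<Rightarrow> 'a \<Rightarrow> real ^ 'g"
    and X :: "nat \<Rightarrow> 'a \<Rightarrow> real ^ 'k"
    and \<beta> :: "'g \<Rightarrow> real ^ 'k"
  assumes P: "prob_space M"
    and G2: "CARD('g) \<ge> 2"
    and meas: "\<And>i. (\<lambda>\<omega>. (W i \<omega>, Y i \<omega>, X i \<omega>)) \<in> borel_measurable M"
    and W01: "\<And>i g \<omega>. \<omega> \<in> space M \<Longrightarrow> W i \<omega> $ g \<in> {0, 1}"
    and Wsum: "\<And>i \<omega>. \<omega> \<in> space M \<Longrightarrow> (\<Sum>g\<in>UNIV. W i \<omega> $ g) = 1"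
    and rho_pos: "\<And>g. measure M {\<omega> \<in> space M. W 0 \<omega> $ g = 1} > 0"
    and rand_assign: "indep_rv M (W 0) (\<lambda>\<omega>. (Y 0 \<omega>, X 0 \<omega>))"
    and indep: "prob_space.indep_vars M (\<lambda>_. borel) (\<lambda>i \<omega>. (W i \<omega>, Y i \<omega>, X i \<omega>)) UNIV"
    and ident: "\<And>i. distr M borel (\<lambda>\<omega>. (W i \<omega>, Y i \<omega>, X i \<omega>))
                    = distr M borel (\<lambda>\<omega>. (W 0 \<omega>, Y 0 \<omega>, X 0 \<omega>))"
    and Y2: "\<And>g. integrable M (\<lambda>\<omega>. (Y 0 \<omega> $ g)\<^sup>2)"
    and X2: "\<And>k. integrable M (\<lambda>\<omega>. (X 0 \<omega> $ k)\<^sup>2)"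
    and beta: "\<And>g. is_lin_proj_coef M
                 (\<lambda>\<omega>. Y 0 \<omega> $ g - integral\<^sup>L M (\<lambda>\<omega>'. Y 0 \<omega>' $ g))
                 (\<lambda>\<omega>. X 0 \<omega> - vec_expectation M (X 0)) (\<beta> g)"
  shows "let \<rho> = (\<lambda>g. measure M {\<omega> \<in> space M. W 0 \<omega> $ g = 1});
             \<mu> = (\<chi> g. integral\<^sup>L M (\<lambda>\<omega>. Y 0 \<omega> $ g));
             \<mu>X = vec_expectation M (X 0);
             Xd = (\<lambda>i \<omega>. X i \<omega> - \<mu>X);
             U = (\<lambda>i g \<omega>. Y i \<omega> $ g - \<mu> $ g - Xd i \<omega> \<bullet> \<beta> g);
             Yobs = (\<lambda>i \<omega>. \<Sum>g\<in>UNIV. W i \<omega> $ g * Y i \<omega> $ g);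
             Ng = (\<lambda>N g \<omega>. \<Sum>i<N. W i \<omega> $ g);
             Ybar = (\<lambda>N \<omega>. \<chi> g. (\<Sum>i<N. W i \<omega> $ g * Yobs i \<omega>) / Ng N g \<omega>);
             L = (\<lambda>i \<omega>. \<chi> g. W i \<omega> $ g * (Xd i \<omega> \<bullet> \<beta> g) / \<rho> g);
             Q = (\<lambda>i \<omega>. \<chi> g. W i \<omega> $ g * U i g \<omega> / \<rho> g)
         in op1 M (\<lambda>N \<omega>. sqrt (real N) *\<^sub>R (Ybar N \<omega> - \<mu>)
                         - (1 / sqrt (real N)) *\<^sub>R (\<Sum>i<N. L i \<omega> + Q i \<omega>))"
proof -
  interpret prob_space M by (rule P)
  define rho where "rho = (\<lambda>g. measure M {\<omega> \<in> space M. W 0 \<omega> $ g = 1})"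
  define mu where "mu = (\<chi> g. integral\<^sup>L M (\<lambda>\<omega>. Y 0 \<omega> $ g))"
  define muX where "muX = vec_expectation M (X 0)"
  define R where "R = (\<lambda>N \<omega>. sqrt (real N) *\<^sub>R
      ((\<chi> g. (\<Sum>i<N. W i \<omega> $ g * (\<Sum>g\<in>UNIV. W i \<omega> $ g * Y i \<omega> $ g)) / (\<Sum>i<N. W i \<omega> $ g)) - mu)
    - (1 / sqrt (real N)) *\<^sub>R (\<Sum>i<N. (\<chi> g. W i \<omega> $ g * ((X i \<omega> - muX) \<bullet> \<beta> g) / rho g)
         + (\<chi> g. W i \<omega> $ g * (Y i \<omega> $ g - mu $ g - (X i \<omega> - muX) \<bullet> \<beta> g) / rho g)))"
  define Vv where "Vv = (\<lambda>i \<omega>. (W i \<omega>, Y i \<omega>, X i \<omega>))"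
  have Vvm: "\<And>i. Vv i \<in> borel_measurable M" using meas unfolding Vv_def .
  have identV: "\<And>i. distr M borel (Vv i) = distr M borel (Vv 0)" using ident unfolding Vv_def .
  have indepV: "indep_vars (\<lambda>_. borel) Vv UNIV" using indep unfolding Vv_def .
  have c1[measurable]: "(\<lambda>v::(real^'g) \<times> (real^'g) \<times> (real^'k). fst v $ h) \<in> borel_measurable borel" for h
    by (intro borel_measurable_continuous_onI continuous_intros)
  have c2[measurable]: "(\<lambda>v::(real^'g) \<times> (real^'g) \<times> (real^'k). fst (snd v) $ h) \<in> borel_measurable borel" for h
    by (intro borel_measurable_continuous_onI continuous_intros)
  have c3[measurable]: "(\<lambda>v::(real^'g) \<times> (real^'g) \<times> (real^'k). snd (snd v)) \<in> borel_measurable borel"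
    by (intro borel_measurable_continuous_onI continuous_intros)
  have Wm[measurable]: "(\<lambda>\<omega>. W i \<omega> $ h) \<in> borel_measurable M" for i h
    using measurable_compose[OF Vvm c1] unfolding Vv_def by simp
  have Ym[measurable]: "(\<lambda>\<omega>. Y i \<omega> $ h) \<in> borel_measurable M" for i h
    using measurable_compose[OF Vvm c2] unfolding Vv_def by simp
  have Xm[measurable]: "X i \<in> borel_measurable M" for i
    using measurable_compose[OF Vvm c3] unfolding Vv_def by simp
  have main: "op1 M R"
  proof (rule op1_vec)
    fix g N
    show "(\<lambda>\<omega>. R N \<omega> $ g) \<in> borel_measurable M"
      unfolding R_def by simp
  next
    fix g :: 'g and e :: real assume e: "e > 0"
    define V where "V = (\<lambda>i \<omega>. W i \<omega> $ g * (Y i \<omega> $ g - mu $ g))"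
    define D where "D = (\<lambda>i \<omega>. W i \<omega> $ g - rho g)"
    define hV where "hV = (\<lambda>v::(real^'g) \<times> (real^'g) \<times> (real^'k). fst v $ g * (fst (snd v) $ g - mu $ g))"
    define hD where "hD = (\<lambda>v::(real^'g) \<times> (real^'g) \<times> (real^'k). fst v $ g - rho g)"
    have hVm[measurable]: "hV \<in> borel_measurable borel" unfolding hV_def by measurable
    have hDm[measurable]: "hD \<in> borel_measurable borel" unfolding hD_def by measurable
    have hV2m: "(\<lambda>v. (hV v)\<^sup>2) \<in> borel_measurable borel" by measurable
    have hD2m: "(\<lambda>v. (hD v)\<^sup>2) \<in> borel_measurable borel" by measurable
    have VhV: "V i \<omega> = hV (Vv i \<omega>)" for i \<omega> unfolding V_def hV_def Vv_def by simp
    have DhD: "D i \<omega> = hD (Vv i \<omega>)" for i \<omega> unfolding D_def hD_def Vv_def by simp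
    have Vm[measurable]: "V i \<in> borel_measurable M" for i unfolding V_def by measurable
    have Dm[measurable]: "D i \<in> borel_measurable M" for i unfolding D_def by measurable
    have rho0: "rho g > 0" unfolding rho_def by (rule rho_pos)
    have rho1: "rho g \<le> 1" unfolding rho_def by simp
    have Yint: "integrable M (\<lambda>\<omega>. Y 0 \<omega> $ g)" by (rule sq_int_imp_int[OF Ym Y2])
    have V0sq: "integrable M (\<lambda>\<omega>. (V 0 \<omega>)\<^sup>2)"
    proof (rule Bochner_Integration.integrable_bound[where f="\<lambda>\<omega>. 2 * (Y 0 \<omega> $ g)\<^sup>2 + 2 * (mu $ g)\<^sup>2"])
      show "integrable M (\<lambda>\<omega>. 2 * (Y 0 \<omega> $ g)\<^sup>2 + 2 * (mu $ g)\<^sup>2)" using Y2[of g] by simp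
      show "(\<lambda>\<omega>. (V 0 \<omega>)\<^sup>2) \<in> borel_measurable M" by measurable
      show "AE \<omega> in M. norm ((V 0 \<omega>)\<^sup>2) \<le> norm (2 * (Y 0 \<omega> $ g)\<^sup>2 + 2 * (mu $ g)\<^sup>2)"
      proof (rule AE_I2)
        fix \<omega> assume w: "\<omega> \<in> space M"
        have "(V 0 \<omega>)\<^sup>2 \<le> (Y 0 \<omega> $ g - mu $ g)\<^sup>2"
          using W01[OF w, of 0 g] unfolding V_def by auto
        also have "\<dots> \<le> 2 * (Y 0 \<omega> $ g)\<^sup>2 + 2 * (mu $ g)\<^sup>2"
          by (rule alg_sq)
        finally show "norm ((V 0 \<omega>)\<^sup>2) \<le> norm (2 * (Y 0 \<omega> $ g)\<^sup>2 + 2 * (mu $ g)\<^sup>2)" by simp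
      qed
    qed
    have Dsq: "integrable M (\<lambda>\<omega>. (D i \<omega>)\<^sup>2)" for i
    proof (rule Bochner_Integration.integrable_bound[where f="\<lambda>\<omega>. 1::real"])
      show "integrable M (\<lambda>\<omega>. 1::real)" by simp
      show "(\<lambda>\<omega>. (D i \<omega>)\<^sup>2) \<in> borel_measurable M" by measurable
      show "AE \<omega> in M. norm ((D i \<omega>)\<^sup>2) \<le> norm (1::real)"
      proof (rule AE_I2)
        fix \<omega> assume w: "\<omega> \<in> space M"
        have "\<bar>D i \<omega>\<bar> \<le> 1" using W01[OF w, of i g] rho0 rho1 unfolding D_def by auto
        then have "(D i \<omega>)\<^sup>2 \<le> 1\<^sup>2" using abs_le_square_iff[of "D i \<omega>" 1] by simp
        then show "norm ((D i \<omega>)\<^sup>2) \<le> norm (1::real)" by simp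
      qed
    qed
    have V0int: "integrable M (V 0)" by (rule sq_int_imp_int[OF Vm V0sq])
    have D0int: "integrable M (D 0)" by (rule sq_int_imp_int[OF Dm Dsq])
    have EV0: "(\<integral>\<omega>. V 0 \<omega> \<partial>M) = 0"
    proof -
      have "(\<integral>\<omega>. (\<lambda>w. w $ g) (W 0 \<omega>) * (\<lambda>(y, x). y $ g - mu $ g) (Y 0 \<omega>, X 0 \<omega>) \<partial>M)
          = (\<integral>\<omega>. (\<lambda>w. w $ g) (W 0 \<omega>) \<partial>M) * (\<integral>\<omega>. (\<lambda>(y, x). y $ g - mu $ g) (Y 0 \<omega>, X 0 \<omega>) \<partial>M)"
      proof (rule indep_rv_mult[OF rand_assign])
        show "(\<lambda>w::real^'g. w $ g) \<in> borel_measurable borel"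
          by (intro borel_measurable_continuous_onI continuous_intros)
        show "(\<lambda>(y::real^'g, x::real^'k). y $ g - mu $ g) \<in> borel_measurable borel"
          unfolding case_prod_beta by (intro borel_measurable_continuous_onI continuous_intros)
        show "integrable M (\<lambda>\<omega>. (\<lambda>w. w $ g) (W 0 \<omega>))"
        proof (rule Bochner_Integration.integrable_bound[where f="\<lambda>\<omega>. 1::real"])
          show "integrable M (\<lambda>\<omega>. 1::real)" by simp
          show "(\<lambda>\<omega>. (\<lambda>w. w $ g) (W 0 \<omega>)) \<in> borel_measurable M" by simp
          show "AE \<omega> in M. norm ((\<lambda>w. w $ g) (W 0 \<omega>)) \<le> norm (1::real)"
          proof (rule AE_I2)
            fix \<omega> assume "\<omega> \<in> space M"
            then have "W 0 \<omega> $ g \<in> {0, 1}" by (rule W01)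
            then show "norm ((\<lambda>w. w $ g) (W 0 \<omega>)) \<le> norm (1::real)" by auto
          qed
        qed
        show "integrable M (\<lambda>\<omega>. (\<lambda>(y, x). y $ g - mu $ g) (Y 0 \<omega>, X 0 \<omega>))"
          using Yint by simp
      qed
      moreover have "(\<integral>\<omega>. Y 0 \<omega> $ g - mu $ g \<partial>M) = 0"
        using Yint by (simp add: mu_def prob_space)
      ultimately show ?thesis unfolding V_def by simp
    qed
    have ED0: "(\<integral>\<omega>. D 0 \<omega> \<partial>M) = 0"
    proof -
      have ind: "W 0 \<omega> $ g = indicator {\<omega> \<in> space M. W 0 \<omega> $ g = 1} \<omega>" if "\<omega> \<in> space M" for \<omega>
        using W01[OF that, of 0 g] that by (auto simp: indicator_def)
      have "(\<integral>\<omega>. W 0 \<omega> $ g \<partial>M) = (\<integral>\<omega>. indicator {\<omega> \<in> space M. W 0 \<omega> $ g = 1} \<omega> \<partial>M)"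
        by (rule Bochner_Integration.integral_cong[OF refl]) (rule ind)
      also have "\<dots> = rho g" unfolding rho_def by (simp add: Int_absorb2 Collect_subset)
      finally have "(\<integral>\<omega>. W 0 \<omega> $ g \<partial>M) = rho g" .
      moreover have "integrable M (\<lambda>\<omega>. W 0 \<omega> $ g)"
        using Bochner_Integration.integrable_add[OF D0int integrable_const[of "rho g"]] unfolding D_def by simp
      ultimately show ?thesis unfolding D_def by (simp add: prob_space)
    qed
    have Vsq: "integrable M (\<lambda>\<omega>. (V i \<omega>)\<^sup>2)" for i
      using transfer_int(1)[where Vv=Vv and h="\<lambda>v. (hV v)\<^sup>2" and i=i, OF identV Vvm hV2m] V0sq
      unfolding VhV by simp
    have Vbnd: "(\<integral>\<omega>. (V i \<omega>)\<^sup>2 \<partial>M) \<le> (\<integral>\<omega>. (V 0 \<omega>)\<^sup>2 \<partial>M)" for i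
      using transfer_int(2)[where Vv=Vv and h="\<lambda>v. (hV v)\<^sup>2" and i=i, OF identV Vvm hV2m]
      unfolding VhV by simp
    have Dbnd: "(\<integral>\<omega>. (D i \<omega>)\<^sup>2 \<partial>M) \<le> (\<integral>\<omega>. (D 0 \<omega>)\<^sup>2 \<partial>M)" for i
      using transfer_int(2)[where Vv=Vv and h="\<lambda>v. (hD v)\<^sup>2" and i=i, OF identV Vvm hD2m]
      unfolding DhD by simp
    have Vorth: "(\<integral>\<omega>. V i \<omega> * V j \<omega> \<partial>M) = 0" if "i \<noteq> j" for i j
      using indep_mult[where Vv=Vv and h=hV, OF indepV identV Vvm hVm _ that] V0int EV0
      unfolding VhV by simp
    have Dorth: "(\<integral>\<omega>. D i \<omega> * D j \<omega> \<partial>M) = 0" if "i \<noteq> j" for i j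
      using indep_mult[where Vv=Vv and h=hD, OF indepV identV Vvm hDm _ that] D0int ED0
      unfolding DhD by simp
    have Req: "R N \<omega> $ g = sqrt (real N) * ((\<Sum>i<N. V i \<omega>) / ((\<Sum>i<N. D i \<omega>) + real N * rho g))
                 - (1 / sqrt (real N)) * ((\<Sum>i<N. V i \<omega>) / rho g)"
      if w: "\<omega> \<in> space M" and N: "N > 0" and T: "(\<Sum>i<N. D i \<omega>) + real N * rho g > 0" for N \<omega>
    proof -
      have wy: "W i \<omega> $ g * (\<Sum>h\<in>UNIV. W i \<omega> $ h * Y i \<omega> $ h) = W i \<omega> $ g * Y i \<omega> $ g" for i
      proof (cases "W i \<omega> $ g = 0")
        case True then show ?thesis by simp
      next
        case False
        then have W1: "W i \<omega> $ g = 1" using W01[OF w, of i g] by auto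
        have nn: "\<forall>h\<in>UNIV - {g}. 0 \<le> W i \<omega> $ h"
        proof
          fix h have "W i \<omega> $ h \<in> {0, 1}" by (rule W01[OF w])
          then show "0 \<le> W i \<omega> $ h" by auto
        qed
        have "(\<Sum>h\<in>UNIV. W i \<omega> $ h) = W i \<omega> $ g + (\<Sum>h\<in>UNIV - {g}. W i \<omega> $ h)"
          by (rule sum.remove) auto
        then have "(\<Sum>h\<in>UNIV - {g}. W i \<omega> $ h) = 0" using Wsum[OF w, of i] W1 by simp
        moreover have "(\<Sum>h\<in>UNIV - {g}. W i \<omega> $ h) = 0 \<longleftrightarrow> (\<forall>h\<in>UNIV - {g}. W i \<omega> $ h = 0)"
          using nn by (intro sum_nonneg_eq_0_iff) auto
        ultimately have z: "\<forall>h\<in>UNIV - {g}. W i \<omega> $ h = 0" by blast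
        have "(\<Sum>h\<in>UNIV. W i \<omega> $ h * Y i \<omega> $ h) = W i \<omega> $ g * Y i \<omega> $ g + (\<Sum>h\<in>UNIV - {g}. W i \<omega> $ h * Y i \<omega> $ h)"
          by (rule sum.remove) auto
        also have "(\<Sum>h\<in>UNIV - {g}. W i \<omega> $ h * Y i \<omega> $ h) = 0" using z by simp
        finally show ?thesis using W1 by simp
      qed
      have TT: "(\<Sum>i<N. D i \<omega>) + real N * rho g = (\<Sum>i<N. W i \<omega> $ g)"
        unfolding D_def by (simp add: sum_subtractf)
      define T where "T = (\<Sum>i<N. W i \<omega> $ g)"
      have T0: "T \<noteq> 0" using T TT unfolding T_def by simp
      have "(\<Sum>i<N. V i \<omega>) = (\<Sum>i<N. W i \<omega> $ g * Y i \<omega> $ g - mu $ g * W i \<omega> $ g)"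
        unfolding V_def by (rule sum.cong[OF refl]) (simp add: right_diff_distrib mult.commute)
      then have SV: "(\<Sum>i<N. V i \<omega>) = (\<Sum>i<N. W i \<omega> $ g * Y i \<omega> $ g) - mu $ g * T"
        unfolding T_def by (simp add: sum_subtractf sum_distrib_left)
      have LQ: "(\<Sum>i<N. W i \<omega> $ g * ((X i \<omega> - muX) \<bullet> \<beta> g) / rho g
                 + W i \<omega> $ g * (Y i \<omega> $ g - mu $ g - (X i \<omega> - muX) \<bullet> \<beta> g) / rho g)
             = (\<Sum>i<N. V i \<omega>) / rho g"
        unfolding V_def sum_divide_distrib by (rule sum.cong[OF refl]) (rule alg_lq)
      have "R N \<omega> $ g = sqrt (real N) * ((\<Sum>i<N. W i \<omega> $ g * (\<Sum>h\<in>UNIV. W i \<omega> $ h * Y i \<omega> $ h)) / T - mu $ g)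
          - (1 / sqrt (real N)) * (\<Sum>i<N. W i \<omega> $ g * ((X i \<omega> - muX) \<bullet> \<beta> g) / rho g
                 + W i \<omega> $ g * (Y i \<omega> $ g - mu $ g - (X i \<omega> - muX) \<bullet> \<beta> g) / rho g)"
        unfolding R_def T_def by simp
      also have "(\<Sum>i<N. W i \<omega> $ g * (\<Sum>h\<in>UNIV. W i \<omega> $ h * Y i \<omega> $ h)) = (\<Sum>i<N. W i \<omega> $ g * Y i \<omega> $ g)"
        by (rule sum.cong[OF refl]) (rule wy)
      also have "(\<Sum>i<N. W i \<omega> $ g * Y i \<omega> $ g) / T - mu $ g = (\<Sum>i<N. V i \<omega>) / T"
        unfolding SV using T0 by (rule alg_div)
      finally show ?thesis unfolding LQ TT T_def .
    qed
    show "(\<lambda>N. prob {\<omega> \<in> space M. e < \<bar>R N \<omega> $ g\<bar>}) \<longlonglongrightarrow> 0"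
      by (rule key[where V=V and D=D and R="\<lambda>N \<omega>. R N \<omega> $ g", OF Vm Vsq Vorth Vbnd Dm Dsq Dorth Dbnd rho0 Req e])
  qed
  then show ?thesis unfolding Let_def R_def rho_def mu_def muX_def .
qed

end
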